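(* Let $\Theta\subseteq\mathbb Z^{Nd}$ be finite and symmetric, let $\eta>4Nd$, and assume that for all $\mathbf x,\mathbf y\in\Theta$ with $\mathbf x\ne\pi\mathbf y$ for every $\pi\in S_N$, $$|(\lambda V(\mathbf x)+U(\mathbf x))-(\lambda V(\mathbf y)+U(\mathbf y))|\ge\eta.$$ Then for every normalized eigenfunction $\varphi\in\ell^2(\Theta)$ of $H_\Theta$ there exists $\mathbf x\in\Theta$ such that $$|\varphi(\mathbf y)|\le\Big(\frac{2Nd}{\eta-2Nd}\Big)^{\min_{\pi\in S_N}\|\mathbf y-\pi\mathbf x\|_1}\quad\text{for all }\mathbf y\in\Theta.$$
   Context: Let $d,N\ge1$. Points of $\mathbb Z^{Nd}$: $\mathbf x=(x_1,\dots,x_N)$, $x_j\in\mathbb Z^d$; $S_N$ acts by $\pi\mathbf x=(x_{\pi(1)},\dots,x_{\pi(N)})$; symmetric = invariant under all $\pi\in S_N$. $H=-\Delta^{(N)}+\lambda V+U$ on $\ell^2(\mathbb Z^{Nd})$ with $\lambda>0$, $(\Delta^{(N)}\varphi)(\mathbf x)=\sum_{\|\mathbf y-\mathbf x\|_1=1}\varphi(\mathbf y)$, $V(\mathbf x)=\sum_j\mathcal V(x_j)$ for a (fixed) real function $\mathcal V$ on $\mathbb Z^d$, $U(\mathbf x)=\sum_{i<j}\mathcal U(x_i-x_j)$ with $\mathcal U:\mathbb Z^d\to\mathbb R$ finitely supported; $H_\Theta=1_\Theta H1_\Theta$ on $\ell^2(\Theta)$. *)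

theory Defs
  imports "HOL-Analysis.Analysis" "HOL-Combinatorics.Permutations"
begin

text \<open>A configuration of N particles in Z^d: x :: 'n \<Rightarrow> 'd \<Rightarrow> int,
  with N = CARD('n), d = CARD('d); x j is the position of particle j.\<close>

type_synonym ('n, 'd) config = "'n \<Rightarrow> 'd \<Rightarrow> int"

definition l1dist :: "('n::finite, 'd::finite) config \<Rightarrow> ('n, 'd) config \<Rightarrow> nat" where
  "l1dist x y = nat (\<Sum>j\<in>UNIV. \<Sum>k\<in>UNIV. \<bar>x j k - y j k\<bar>)"

definition perm_act :: "('n \<Rightarrow> 'n) \<Rightarrow> ('n, 'd) config \<Rightarrow> ('n, 'd) config" where
  "perm_act \<pi> x = (\<lambda>j. x (\<pi> j))"

definition symmetric_set :: "('n, 'd) config set \<Rightarrow> bool" where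
  "symmetric_set \<Theta> \<longleftrightarrow> (\<forall>\<pi> x. \<pi> permutes (UNIV::'n set) \<longrightarrow> x \<in> \<Theta> \<longrightarrow> perm_act \<pi> x \<in> \<Theta>)"

definition sym_dist :: "('n::finite, 'd::finite) config \<Rightarrow> ('n, 'd) config \<Rightarrow> nat" where
  "sym_dist y x = Min {l1dist y (perm_act \<pi> x) | \<pi>. \<pi> permutes (UNIV::'n set)}"

definition Vpot :: "(('d \<Rightarrow> int) \<Rightarrow> real) \<Rightarrow> ('n::finite, 'd) config \<Rightarrow> real" where
  "Vpot calV x = (\<Sum>j\<in>UNIV. calV (x j))"

definition Upot :: "(('d \<Rightarrow> int) \<Rightarrow> real) \<Rightarrow> ('n::{finite,linorder}, 'd) config \<Rightarrow> real" where
  "Upot calU x = (\<Sum>(i,j)\<in>{(i,j). i < j}. calU (x i - x j))"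

text \<open>Restricted Hamiltonian H_Theta = 1_Theta (-Delta + lambda V + U) 1_Theta,
  acting on functions on Theta (values outside Theta are ignored).\<close>
definition H_Theta :: "('n::{finite,linorder}, 'd::finite) config set \<Rightarrow> real
    \<Rightarrow> (('d \<Rightarrow> int) \<Rightarrow> real) \<Rightarrow> (('d \<Rightarrow> int) \<Rightarrow> real)
    \<Rightarrow> (('n, 'd) config \<Rightarrow> complex) \<Rightarrow> ('n, 'd) config \<Rightarrow> complex" where
  "H_Theta \<Theta> lam calV calU \<phi> x =
     (if x \<in> \<Theta> then
        - (\<Sum>y\<in>{y\<in>\<Theta>. l1dist y x = 1}. \<phi> y)
        + complex_of_real (lam * Vpot calV x + Upot calU x) * \<phi> x
      else 0)"

end

theory Submission imports Defs begin

lemma l1dist_int: "int (l1dist x y) = (\<Sum>j\<in>UNIV. \<Sum>k\<in>UNIV. \<bar>x j k - y j k\<bar>)"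
  unfolding l1dist_def by (simp add: sum_nonneg)

lemma l1dist_sym: "l1dist x y = l1dist y x"
  unfolding l1dist_def by (simp add: abs_minus_commute)

lemma l1dist_self: "l1dist x x = 0"
  unfolding l1dist_def by simp

lemma l1dist_tri: "l1dist x z \<le> l1dist x y + l1dist y z"
proof -
  have "(\<Sum>j\<in>UNIV. \<Sum>k\<in>UNIV. \<bar>x j k - z j k\<bar>) \<le>
        (\<Sum>j\<in>UNIV. \<Sum>k\<in>UNIV. \<bar>x j k - y j k\<bar> + \<bar>y j k - z j k\<bar>)"
    by (intro sum_mono) auto
  also have "\<dots> = (\<Sum>j\<in>UNIV. \<Sum>k\<in>UNIV. \<bar>x j k - y j k\<bar>) + (\<Sum>j\<in>UNIV. \<Sum>k\<in>UNIV. \<bar>y j k - z j k\<bar>)"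
    by (simp add: sum.distrib)
  finally have "int (l1dist x z) \<le> int (l1dist x y) + int (l1dist y z)"
    by (simp add: l1dist_int)
  then show ?thesis by simp
qed

lemma l1dist_one:
  fixes x y :: "('n::finite,'d::finite) config"
  assumes "l1dist y x = 1"
  shows "\<exists>p b. y = x(fst p := (x (fst p))(snd p := x (fst p) (snd p) + (if b then 1 else -1)))"
proof -
  define f where "f p = \<bar>y (fst p) (snd p) - x (fst p) (snd p)\<bar>" for p :: "'n \<times> 'd"
  have "(\<Sum>j\<in>UNIV. \<Sum>k\<in>UNIV. \<bar>y j k - x j k\<bar>) = sum f (UNIV \<times> UNIV)"
    unfolding f_def by (simp add: sum.cartesian_product case_prod_beta)
  then have s: "sum f UNIV = 1" using l1dist_int[of y x] assms by simp
  have "\<exists>p. f p \<noteq> 0"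
  proof (rule ccontr)
    assume "\<not> ?thesis" then have "sum f UNIV = 0" by (intro sum.neutral) auto
    with s show False by simp
  qed
  then obtain p where p: "f p \<noteq> 0" by blast
  have nn: "\<And>q. f q \<ge> 0" unfolding f_def by simp
  have sr: "sum f UNIV = f p + sum f (UNIV - {p})"
    by (simp add: sum.remove)
  have r0: "sum f (UNIV - {p}) \<ge> 0" by (simp add: sum_nonneg nn)
  have fp: "f p = 1" using s sr r0 p nn[of p] by linarith
  then have "sum f (UNIV - {p}) = 0" using s sr by linarith
  then have z: "\<And>q. q \<noteq> p \<Longrightarrow> f q = 0"
    using sum_nonneg_eq_0_iff[of "UNIV - {p}" f] nn by auto
  define b where "b = (y (fst p) (snd p) - x (fst p) (snd p) = 1)"
  have "y = x(fst p := (x (fst p))(snd p := x (fst p) (snd p) + (if b then 1 else -1)))"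
  proof (intro ext)
    fix j k
    show "y j k = (x(fst p := (x (fst p))(snd p := x (fst p) (snd p) + (if b then 1 else -1)))) j k"
    proof (cases "(j,k) = p")
      case True
      then show ?thesis using fp unfolding f_def b_def by (auto split: if_splits simp: abs_if)
    next
      case False
      then have "f (j,k) = 0" using z by blast
      then show ?thesis using False unfolding f_def by (cases p) auto
    qed
  qed
  then show ?thesis by blast
qed

lemma nbr_card:
  fixes x :: "('n::finite,'d::finite) config"
  shows "card {y\<in>S. l1dist y x = 1} \<le> 2 * CARD('n) * CARD('d)"
proof -
  define h where "h = (\<lambda>(p::('n\<times>'d), b::bool). x(fst p := (x (fst p))(snd p := x (fst p) (snd p) + (if b then 1 else -1))))"
  have "{y\<in>S. l1dist y x = 1} \<subseteq> h ` UNIV"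
  proof
    fix y assume "y \<in> {y\<in>S. l1dist y x = 1}"
    then obtain p b where "y = x(fst p := (x (fst p))(snd p := x (fst p) (snd p) + (if b then 1 else -1)))"
      using l1dist_one by blast
    then have "y = h (p,b)" unfolding h_def by simp
    then show "y \<in> h ` UNIV" by blast
  qed
  then have "card {y\<in>S. l1dist y x = 1} \<le> card (h ` UNIV)"
    by (intro card_mono) auto
  also have "\<dots> \<le> card (UNIV :: (('n\<times>'d)\<times>bool) set)" by (rule card_image_le) simp
  also have "\<dots> = 2 * CARD('n) * CARD('d)" by (simp add: card_UNIV_bool)
  finally show ?thesis .
qed

lemma sym_dist_le:
  fixes y x :: "('n::finite,'d::finite) config"
  assumes "\<pi> permutes (UNIV::'n set)"
  shows "sym_dist y x \<le> l1dist y (perm_act \<pi> x)"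
  unfolding sym_dist_def
  by (rule Min_le) (use assms finite_permutations[of "UNIV::'n set"] in auto)

lemma sym_dist_attained:
  fixes y x :: "('n::finite,'d::finite) config"
  shows "\<exists>\<pi>. \<pi> permutes (UNIV::'n set) \<and> sym_dist y x = l1dist y (perm_act \<pi> x)"
proof -
  have "sym_dist y x \<in> {l1dist y (perm_act \<pi> x) | \<pi>. \<pi> permutes (UNIV::'n set)}"
    unfolding sym_dist_def
  proof (rule Min_in)
    show "finite {l1dist y (perm_act \<pi> x) | \<pi>. \<pi> permutes (UNIV::'n set)}"
      using finite_permutations[of "UNIV::'n set"] by simp
    show "{l1dist y (perm_act \<pi> x) | \<pi>. \<pi> permutes (UNIV::'n set)} \<noteq> {}"
      using permutes_id[of "UNIV::'n set"] by blast
  qed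
  then show ?thesis by auto
qed

lemma sym_dist_nbr:
  fixes y z x :: "('n::finite,'d::finite) config"
  assumes "l1dist z y = 1"
  shows "sym_dist y x \<le> sym_dist z x + 1"
proof -
  obtain \<pi> where p: "\<pi> permutes (UNIV::'n set)" "sym_dist z x = l1dist z (perm_act \<pi> x)"
    using sym_dist_attained by blast
  have "sym_dist y x \<le> l1dist y (perm_act \<pi> x)" by (rule sym_dist_le[OF p(1)])
  also have "\<dots> \<le> l1dist y z + l1dist z (perm_act \<pi> x)" by (rule l1dist_tri)
  finally show ?thesis using p(2) assms l1dist_sym[of y z] by simp
qed

lemma sym_dist_pos:
  fixes y x :: "('n::finite,'d::finite) config"
  assumes "sym_dist y x \<ge> 1" "\<pi> permutes (UNIV::'n set)"
  shows "y \<noteq> perm_act \<pi> x"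
  using sym_dist_le[OF assms(2), of y x] assms(1) l1dist_self[of y] by auto

theorem lemma4p4:
  fixes \<Theta> :: "('n::{finite,linorder}, 'd::finite) config set"
    and lam \<eta> :: real
    and calV calU :: "('d \<Rightarrow> int) \<Rightarrow> real"
    and \<phi> :: "('n, 'd) config \<Rightarrow> complex"
    and E :: complex
  assumes lam: "lam > 0"
    and Ufin: "finite {z. calU z \<noteq> 0}"
    and fin: "finite \<Theta>"
    and sym: "symmetric_set \<Theta>"
    and eta: "\<eta> > 4 * real CARD('n) * real CARD('d)"
    and gap: "\<And>x y. x \<in> \<Theta> \<Longrightarrow> y \<in> \<Theta> \<Longrightarrow>
               (\<forall>\<pi>. \<pi> permutes (UNIV::'n set) \<longrightarrow> x \<noteq> perm_act \<pi> y) \<Longrightarrow>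
               \<bar>(lam * Vpot calV x + Upot calU x) - (lam * Vpot calV y + Upot calU y)\<bar> \<ge> \<eta>"
    and norm: "(\<Sum>x\<in>\<Theta>. (cmod (\<phi> x))\<^sup>2) = 1"
    and eig: "\<And>x. x \<in> \<Theta> \<Longrightarrow> H_Theta \<Theta> lam calV calU \<phi> x = E * \<phi> x"
  shows "\<exists>x\<in>\<Theta>. \<forall>y\<in>\<Theta>.
           cmod (\<phi> y) \<le> (2 * real CARD('n) * real CARD('d)
                            / (\<eta> - 2 * real CARD('n) * real CARD('d))) ^ sym_dist y x"
proof -
  define D where "D = 2 * real CARD('n) * real CARD('d)"
  define q where "q = D / (\<eta> - D)"
  define W where "W x = lam * Vpot calV x + Upot calU x" for x :: "('n,'d) config" 
  define Nb where "Nb y = {z\<in>\<Theta>. l1dist z y = 1}" for y :: "('n,'d) config" 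
  have c1: "real CARD('n) \<ge> 1" "real CARD('d) \<ge> 1" by (simp_all add: Suc_leI)
  have "1 * 1 \<le> real CARD('n) * real CARD('d)" by (rule mult_mono) (use c1 in auto)
  then have D1: "D \<ge> 2" unfolding D_def by simp
  have e2: "\<eta> > 2 * D" using eta unfolding D_def by (simp add: mult.assoc)
  have ed: "\<eta> - D > 0" using e2 D1 by linarith
  have card_nb: "real (card (Nb y)) \<le> D" for y
  proof -
    have "real (card (Nb y)) \<le> real (2 * CARD('n) * CARD('d))"
      unfolding Nb_def by (rule of_nat_mono) (rule nbr_card)
    then show ?thesis unfolding D_def by simp
  qed
  have key: "complex_of_real (W y) * \<phi> y - E * \<phi> y = (\<Sum>z\<in>Nb y. \<phi> z)" if "y \<in> \<Theta>" for y
    using eig[OF that] that unfolding H_Theta_def Nb_def W_def by (auto simp: algebra_simps)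
  have keyb: "cmod (complex_of_real (W y) - E) * cmod (\<phi> y) \<le> (\<Sum>z\<in>Nb y. cmod (\<phi> z))"
    if "y \<in> \<Theta>" for y
  proof -
    have "cmod (complex_of_real (W y) - E) * cmod (\<phi> y) = cmod (\<Sum>z\<in>Nb y. \<phi> z)"
      using key[OF that] by (metis left_diff_distrib norm_mult)
    also have "\<dots> \<le> (\<Sum>z\<in>Nb y. cmod (\<phi> z))" by (rule norm_sum)
    finally show ?thesis .
  qed
  have sumb: "(\<Sum>z\<in>Nb y. cmod (\<phi> z)) \<le> D * M" if "\<And>z. z \<in> Nb y \<Longrightarrow> cmod (\<phi> z) \<le> M" "M \<ge> 0" for y M
  proof -
    have "(\<Sum>z\<in>Nb y. cmod (\<phi> z)) \<le> (\<Sum>z\<in>Nb y. M)" by (rule sum_mono) (use that in auto)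
    also have "\<dots> = real (card (Nb y)) * M" by simp
    also have "\<dots> \<le> D * M" using card_nb[of y] that(2) by (rule mult_right_mono)
    finally show ?thesis .
  qed
  have le1: "cmod (\<phi> y) \<le> 1" if "y \<in> \<Theta>" for y
  proof -
    have "(cmod (\<phi> y))\<^sup>2 \<le> 1" using norm member_le_sum[OF that, of "\<lambda>x. (cmod (\<phi> x))\<^sup>2"] fin by auto
    then show ?thesis by (simp add: power_le_one_iff)
  qed
  have ne: "\<Theta> \<noteq> {}" using norm by auto
  obtain x0 where x0: "x0 \<in> \<Theta>" "\<And>y. y \<in> \<Theta> \<Longrightarrow> cmod (\<phi> y) \<le> cmod (\<phi> x0)"
  proof -
    have m: "Max ((\<lambda>y. cmod (\<phi> y)) ` \<Theta>) \<in> (\<lambda>y. cmod (\<phi> y)) ` \<Theta>"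
      using ne fin by (intro Min_in Max_in) auto
    then obtain x where "x \<in> \<Theta>" "cmod (\<phi> x) = Max ((\<lambda>y. cmod (\<phi> y)) ` \<Theta>)" by auto
    moreover have "\<And>y. y \<in> \<Theta> \<Longrightarrow> cmod (\<phi> y) \<le> Max ((\<lambda>y. cmod (\<phi> y)) ` \<Theta>)"
      using fin by (intro Max_ge) auto
    ultimately show ?thesis using that by metis
  qed
  have "cmod (\<phi> x0) > 0"
  proof (rule ccontr)
    assume "\<not> ?thesis"
    then have "\<And>y. y \<in> \<Theta> \<Longrightarrow> \<phi> y = 0" using x0 by (metis norm_ge_zero norm_le_zero_iff order.trans not_less)
    then show False using norm by simp
  qed
  have WE0: "cmod (complex_of_real (W x0) - E) \<le> D"
  proof -
    have "cmod (complex_of_real (W x0) - E) * cmod (\<phi> x0) \<le> D * cmod (\<phi> x0)"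
      using keyb[OF x0(1)] sumb[of x0 "cmod (\<phi> x0)"] x0(2) unfolding Nb_def by force
    then show ?thesis using \<open>cmod (\<phi> x0) > 0\<close> by simp
  qed
  have far: "(\<eta> - D) * cmod (\<phi> y) \<le> (\<Sum>z\<in>Nb y. cmod (\<phi> z))" if "y \<in> \<Theta>" "sym_dist y x0 \<ge> 1" for y
  proof -
    have "\<eta> \<le> \<bar>W y - W x0\<bar>" unfolding W_def
      by (rule gap[OF that(1) x0(1)]) (use sym_dist_pos[OF that(2)] in blast)
    also have "\<bar>W y - W x0\<bar> = cmod ((complex_of_real (W y) - E) - (complex_of_real (W x0) - E))"
    proof -
      have "(complex_of_real (W y) - E) - (complex_of_real (W x0) - E) = complex_of_real (W y - W x0)" by simp
      then show ?thesis by (simp only: norm_of_real)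
    qed
    also have "\<dots> \<le> cmod (complex_of_real (W y) - E) + cmod (complex_of_real (W x0) - E)"
      by (rule norm_triangle_ineq4)
    finally have "\<eta> - D \<le> cmod (complex_of_real (W y) - E)" using WE0 by linarith
    then have "(\<eta> - D) * cmod (\<phi> y) \<le> cmod (complex_of_real (W y) - E) * cmod (\<phi> y)"
      by (rule mult_right_mono) simp
    then show ?thesis using keyb[OF that(1)] by linarith
  qed
  have q0: "q \<ge> 0" unfolding q_def using D1 ed by simp
  have ind: "\<forall>y\<in>\<Theta>. sym_dist y x0 \<ge> k \<longrightarrow> cmod (\<phi> y) \<le> q ^ k" for k
  proof (induction k)
    case 0
    then show ?case using le1 by simp
  next
    case (Suc k)
    show ?case
    proof (intro ballI impI)
      fix y assume y: "y \<in> \<Theta>" "Suc k \<le> sym_dist y x0"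
      have "\<And>z. z \<in> Nb y \<Longrightarrow> cmod (\<phi> z) \<le> q ^ k"
      proof -
        fix z assume z: "z \<in> Nb y"
        then have "sym_dist y x0 \<le> sym_dist z x0 + 1" using sym_dist_nbr unfolding Nb_def by blast
        then show "cmod (\<phi> z) \<le> q ^ k" using Suc.IH z y(2) unfolding Nb_def by auto
      qed
      then have "(\<Sum>z\<in>Nb y. cmod (\<phi> z)) \<le> D * q ^ k" using sumb q0 by simp
      then have "(\<eta> - D) * cmod (\<phi> y) \<le> D * q ^ k" using far[OF y(1)] y(2) by force
      then have "cmod (\<phi> y) \<le> D * q ^ k / (\<eta> - D)" using ed by (simp add: field_simps)
      also have "\<dots> = q ^ Suc k" unfolding q_def by simp
      finally show "cmod (\<phi> y) \<le> q ^ Suc k" .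
    qed
  qed
  show ?thesis
    using ind x0(1) unfolding q_def D_def by blast
qed

end
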